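(* Let $x\in\beta\mathbb{N}$ and $n\in\mathbb{N}$. Then there exists $\alpha\in\mathcal{A}$ with $\sigma(\alpha)=n$ and $F_\alpha\subseteq x$ if and only if $x\in\overline{L_n}$.
   Context: $\mathbb{N}=\{1,2,3,\dots\}$; $\beta\mathbb{N}$ is the Stone–Čech compactification of discrete $\mathbb{N}$, identified with the set of ultrafilters on $\mathbb{N}$ (natural numbers identified with principal ultrafilters). For $A\subseteq\mathbb{N}$, $\overline{A}=\{x\in\beta\mathbb{N}: A\in x\}$. $P$ is the set of prime numbers, $L_0=\{1\}$ and for $n\ge1$, $L_n=\{a_1a_2\cdots a_n: a_1,\dots,a_n\in P\}$ (products of exactly $n$ primes, counted with multiplicity). For $p\in\overline{P}$ and $k\in\mathbb{N}$, $p^k$ denotes the ultrafilter generated by the sets $A^k=\{a^k:a\in A\}$, $A\in p$; such ultrafilters are called basic, and $\mathcal{B}$ is the set of basic ultrafilters. $\mathcal{A}$ is the set of functions $\alpha:\mathcal{B}\to\mathbb{N}\cup\{0\}$ with finite support, written $\alpha=\{(p_1^{k_1},n_1),\dots,(p_m^{k_m},n_m)\}$ with $p_i\in\overline{P}$, the $p_i^{k_i}$ distinct and $n_i\ge1$ (and $\alpha(b)=0$ elsewhere). For such $\alpha$, $\sigma(\alpha)=\sum_{i=1}^m k_in_i$, and $F_\alpha$ is the family of all sets $(A_1^{k_1})^{(n_1)}(A_2^{k_2})^{(n_2)}\cdots(A_m^{k_m})^{(n_m)}=\{\prod_{i=1}^m\prod_{j=1}^{n_i}a_{i,j}^{k_i}: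 a_{i,j}\in A_i \text{ for all } i,j,\ \text{the } a_{i,j} \text{ pairwise distinct}\}$, where $A_i\in p_i$, $A_i\subseteq P$, $A_i=A_j$ if $p_i=p_j$, and $A_i\cap A_j=\emptyset$ otherwise. *)

theory Defs
  imports "HOL-Computational_Algebra.Primes"
begin

definition Npos :: "nat set" where
  "Npos = {n. n \<ge> 1}"

text \<open>Ultrafilters on \<open>\<nat>\<close> (points of \<open>\<beta>\<nat>\<close>), as families of subsets of \<open>Npos\<close>.\<close>
definition is_ultrafilter :: "nat set set \<Rightarrow> bool" where
  "is_ultrafilter U \<longleftrightarrow>
     U \<subseteq> Pow Npos \<and> Npos \<in> U \<and> {} \<notin> U \<and>
     (\<forall>A B. A \<in> U \<and> B \<in> U \<longrightarrow> A \<inter> B \<in> U) \<and>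
     (\<forall>A B. A \<in> U \<and> A \<subseteq> B \<and> B \<subseteq> Npos \<longrightarrow> B \<in> U) \<and>
     (\<forall>A. A \<subseteq> Npos \<longrightarrow> A \<in> U \<or> Npos - A \<in> U)"

definition bar :: "nat set \<Rightarrow> nat set set set" where
  "bar A = {x. is_ultrafilter x \<and> A \<in> x}"

definition Primes :: "nat set" where
  "Primes = {p. prime p}"

definition L :: "nat \<Rightarrow> nat set" where
  "L n = {prod_list xs | xs. length xs = n \<and> set xs \<subseteq> Primes}"

definition upow :: "nat set set \<Rightarrow> nat \<Rightarrow> nat set set" where
  "upow p k = {B. B \<subseteq> Npos \<and> (\<exists>A\<in>p. (\<lambda>a. a ^ k) ` A \<subseteq> B)}"

text \<open>An element \<open>\<alpha> = {(p_1^{k_1},n_1),...,(p_m^{k_m},n_m)}\<close> of \<open>\<A>\<close>, represented as the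
  list of triples \<open>(p_i, k_i, n_i)\<close> with \<open>p_i \<in> \<overline>P\<close>, \<open>k_i, n_i \<ge> 1\<close> and the
  basic ultrafilters \<open>p_i^{k_i}\<close> pairwise distinct.\<close>
type_synonym alpha = "(nat set set \<times> nat \<times> nat) list"

definition valid_alpha :: "alpha \<Rightarrow> bool" where
  "valid_alpha al \<longleftrightarrow>
     (\<forall>(p, k, n) \<in> set al. p \<in> bar Primes \<and> k \<ge> 1 \<and> n \<ge> 1) \<and>
     distinct (map (\<lambda>(p, k, n). upow p k) al)"

definition sigma :: "alpha \<Rightarrow> nat" where
  "sigma al = (\<Sum>i<length al. fst (snd (al ! i)) * snd (snd (al ! i)))"

definition F_alpha :: "alpha \<Rightarrow> nat set set" where
  "F_alpha al =
     {S. \<exists>A :: nat \<Rightarrow> nat set.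
        (\<forall>i<length al. A i \<in> fst (al ! i) \<and> A i \<subseteq> Primes) \<and>
        (\<forall>i<length al. \<forall>j<length al.
            (fst (al ! i) = fst (al ! j) \<longrightarrow> A i = A j) \<and>
            (fst (al ! i) \<noteq> fst (al ! j) \<longrightarrow> A i \<inter> A j = {})) \<and>
        S = {(\<Prod>i<length al. \<Prod>j<snd (snd (al ! i)). a i j ^ fst (snd (al ! i))) | a.
               (\<forall>i<length al. \<forall>j<snd (snd (al ! i)). a i j \<in> A i) \<and>
               inj_on (\<lambda>(i, j). a i j) {(i, j). i < length al \<and> j < snd (snd (al ! i))}}}"

end

theory Submission imports Defs begin

definition Om :: "nat \<Rightarrow> nat" where "Om a = size (prime_factorization a)"

lemma Om_mult: "a \<noteq> 0 \<Longrightarrow> b \<noteq> 0 \<Longrightarrow> Om (a * b) = Om a + Om b"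
  by (simp add: Om_def prime_factorization_mult)

lemma Om_prime_power: "prime p \<Longrightarrow> Om (p ^ k) = k"
  by (simp add: Om_def prime_factorization_prime_power)

lemma Om_prod: "finite I \<Longrightarrow> (\<forall>i\<in>I. f i \<noteq> (0::nat)) \<Longrightarrow> Om (\<Prod>i\<in>I. f i) = (\<Sum>i\<in>I. Om (f i))"
proof (induction I rule: finite_induct)
  case (insert i I)
  have "(\<Prod>i\<in>I. f i) \<noteq> 0" using insert by auto
  then show ?case using insert by (simp add: Om_mult)
qed (simp add: Om_def)

lemma L_char: "L n = {a. a \<noteq> 0 \<and> Om a = n}"
proof (rule set_eqI, rule iffI)
  fix a assume "a \<in> L n"
  then obtain xs where xs: "a = prod_list xs" "length xs = n" "set xs \<subseteq> Primes" by (auto simp: L_def)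
  have pr: "\<And>p. p \<in># mset xs \<Longrightarrow> prime p" using xs(3) by (auto simp: Primes_def)
  have "a = prod_mset (mset xs)" using xs(1) by (simp add: prod_mset_prod_list)
  then have "prime_factorization a = mset xs" using prime_factorization_prod_mset_primes[of "mset xs", OF pr] by simp
  then have "Om a = n" using xs by (simp add: Om_def)
  moreover have "0 \<notin> set xs" using xs(3) by (auto simp: Primes_def)
  then have "a \<noteq> 0" using xs(1) by (simp add: prod_list_zero_iff)
  ultimately show "a \<in> {a. a \<noteq> 0 \<and> Om a = n}" by simp
next
  fix a :: nat assume "a \<in> {a. a \<noteq> 0 \<and> Om a = n}"
  then have a: "a \<noteq> 0" and an: "Om a = n" by auto
  obtain xs where xs: "mset xs = prime_factorization a" using ex_mset by blast
  have "prod_list xs = prod_mset (mset xs)" by (simp add: prod_mset_prod_list)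
  also have "\<dots> = a" using prod_mset_prime_factorization[OF a] xs by simp
  finally have "prod_list xs = a" .
  moreover have "length xs = Om a" unfolding Om_def xs[symmetric] by simp
  moreover have "set xs \<subseteq> Primes"
  proof
    fix q assume "q \<in> set xs"
    then have "q \<in># prime_factorization a" unfolding xs[symmetric] by simp
    then show "q \<in> Primes" by (auto simp: Primes_def dest: in_prime_factors_imp_prime)
  qed
  ultimately show "a \<in> L n" using an by (auto simp: L_def)
qed

lemma L_Npos: "L n \<subseteq> Npos" by (auto simp: L_char Npos_def)

lemma uf_D: assumes "is_ultrafilter U" shows "U \<subseteq> Pow Npos" "Npos \<in> U" "{} \<notin> U"
  "\<And>A B. A\<in>U \<Longrightarrow> B\<in>U \<Longrightarrow> A\<inter>B\<in>U" "\<And>A B. A\<in>U \<Longrightarrow> A\<subseteq>B \<Longrightarrow> B\<subseteq>Npos \<Longrightarrow> B\<in>U"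
  "\<And>A. A\<subseteq>Npos \<Longrightarrow> A\<in>U \<or> Npos - A \<in> U"
  using assms unfolding is_ultrafilter_def by (elim conjE; blast)+

lemma uf_sub: "is_ultrafilter U \<Longrightarrow> B \<in> U \<Longrightarrow> B \<subseteq> Npos"
  using uf_D(1) by blast

lemma uf_inter: "is_ultrafilter U \<Longrightarrow> A \<in> U \<Longrightarrow> B \<in> U \<Longrightarrow> A \<inter> B \<in> U"
  using uf_D(4) by blast

lemma uf_mono: "is_ultrafilter U \<Longrightarrow> A \<in> U \<Longrightarrow> A \<subseteq> B \<Longrightarrow> B \<subseteq> Npos \<Longrightarrow> B \<in> U"
  using uf_D(5) by blast

lemma uf_compl: "is_ultrafilter U \<Longrightarrow> A \<subseteq> Npos \<Longrightarrow> A \<notin> U \<Longrightarrow> Npos - A \<in> U"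
  using uf_D(6) by blast

lemma uf_nonempty: "is_ultrafilter U \<Longrightarrow> A \<in> U \<Longrightarrow> A \<noteq> {}"
  using uf_D(3) by blast

lemma uf_Npos: "is_ultrafilter U \<Longrightarrow> Npos \<in> U"
  using uf_D(2) by blast

lemma uf_not_both: "is_ultrafilter U \<Longrightarrow> A \<in> U \<Longrightarrow> Npos - A \<notin> U"
proof
  assume u: "is_ultrafilter U" and a: "A \<in> U" and b: "Npos - A \<in> U"
  have "A \<inter> (Npos - A) \<in> U" using uf_inter[OF u a b] .
  then show False using uf_nonempty[OF u] by auto
qed

lemma uf_fin_inter:
  assumes "is_ultrafilter U" "finite I" "\<forall>i\<in>I. B i \<in> U"
  shows "Npos \<inter> (\<Inter>i\<in>I. B i) \<in> U"
  using assms(2,3)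
proof (induction I rule: finite_induct)
  case empty then show ?case using uf_Npos[OF assms(1)] by simp
next
  case (insert i I)
  have "B i \<inter> (Npos \<inter> (\<Inter>i\<in>I. B i)) \<in> U" using insert uf_inter[OF assms(1)] by auto
  moreover have "B i \<inter> (Npos \<inter> (\<Inter>i\<in>I. B i)) = Npos \<inter> (\<Inter>i\<in>insert i I. B i)" by auto
  ultimately show ?case by simp
qed

lemma uf_fin_union:
  assumes "is_ultrafilter U" "finite I" "(\<Union>i\<in>I. B i) \<in> U"
  shows "\<exists>i\<in>I. B i \<in> U"
  using assms(2,3)
proof (induction I rule: finite_induct)
  case empty then show ?case using uf_nonempty[OF assms(1)] by auto
next
  case (insert i I)
  show ?case
  proof (cases "B i \<in> U")
    case False
    have sub: "(\<Union>i\<in>insert i I. B i) \<subseteq> Npos" using uf_sub[OF assms(1) insert(4)] .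
    then have "Npos - B i \<in> U" using uf_compl[OF assms(1) _ False] by auto
    then have "(Npos - B i) \<inter> (\<Union>i\<in>insert i I. B i) \<in> U" using uf_inter[OF assms(1)] insert(4) by auto
    then have "(\<Union>i\<in>I. B i) \<in> U" by (rule uf_mono[OF assms(1)]) (use sub in auto)
    then show ?thesis using insert by auto
  qed auto
qed

lemma uf_push:
  assumes "is_ultrafilter U" "T \<in> U" "\<forall>a\<in>T. f a \<in> Npos"
  shows "is_ultrafilter {B. B \<subseteq> Npos \<and> {a\<in>T. f a \<in> B} \<in> U}"
  unfolding is_ultrafilter_def
proof (intro conjI allI impI)
  show "{B. B \<subseteq> Npos \<and> {a\<in>T. f a \<in> B} \<in> U} \<subseteq> Pow Npos" by auto
  have "{a\<in>T. f a \<in> Npos} = T" using assms(3) by auto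
  then show "Npos \<in> {B. B \<subseteq> Npos \<and> {a\<in>T. f a \<in> B} \<in> U}" using assms by auto
  show "{} \<notin> {B. B \<subseteq> Npos \<and> {a\<in>T. f a \<in> B} \<in> U}" using uf_nonempty[OF assms(1)] by auto
next
  fix A B assume hAB: "A \<in> {B. B \<subseteq> Npos \<and> {a\<in>T. f a \<in> B} \<in> U} \<and> B \<in> {B. B \<subseteq> Npos \<and> {a\<in>T. f a \<in> B} \<in> U}"
  then show "A \<inter> B \<in> {B. B \<subseteq> Npos \<and> {a\<in>T. f a \<in> B} \<in> U}"
  proof -
    have "{a\<in>T. f a \<in> A \<inter> B} = {a\<in>T. f a \<in> A} \<inter> {a\<in>T. f a \<in> B}" by blast
    then show ?thesis
    using uf_inter[OF assms(1), of "{a\<in>T. f a \<in> A}" "{a\<in>T. f a \<in> B}"] hAB by auto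
  qed
next
  fix A B assume h: "A \<in> {B. B \<subseteq> Npos \<and> {a\<in>T. f a \<in> B} \<in> U} \<and> A \<subseteq> B \<and> B \<subseteq> Npos"
  have "{a\<in>T. f a \<in> B} \<in> U"
    by (rule uf_mono[OF assms(1), of "{a\<in>T. f a \<in> A}"]) (use h uf_sub[OF assms(1,2)] in auto)
  then show "B \<in> {B. B \<subseteq> Npos \<and> {a\<in>T. f a \<in> B} \<in> U}" using h by auto
next
  fix A assume A: "A \<subseteq> Npos"
  show "A \<in> {B. B \<subseteq> Npos \<and> {a\<in>T. f a \<in> B} \<in> U} \<or> Npos - A \<in> {B. B \<subseteq> Npos \<and> {a\<in>T. f a \<in> B} \<in> U}"
  proof (cases "{a\<in>T. f a \<in> A} \<in> U")
    case False
    have "Npos - {a\<in>T. f a \<in> A} \<in> U" using uf_compl[OF assms(1) _ False] uf_sub[OF assms(1,2)] by auto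
    then have "T \<inter> (Npos - {a\<in>T. f a \<in> A}) \<in> U" using uf_inter[OF assms(1,2)] by auto
    moreover have "T \<inter> (Npos - {a\<in>T. f a \<in> A}) = {a\<in>T. f a \<in> Npos - A}"
      using assms(3) uf_sub[OF assms(1,2)] by auto
    ultimately show ?thesis by auto
  qed (use A in auto)
qed

lemma uf_sub_eq: "is_ultrafilter U \<Longrightarrow> is_ultrafilter V \<Longrightarrow> U \<subseteq> V \<Longrightarrow> U = V"
proof (rule ccontr)
  assume u: "is_ultrafilter U" and v: "is_ultrafilter V" and s: "U \<subseteq> V" and ne: "U \<noteq> V"
  then obtain B where B: "B \<in> V" "B \<notin> U" by blast
  have "Npos - B \<in> U" using uf_compl[OF u uf_sub[OF v B(1)] B(2)] .
  then have "Npos - B \<in> V" using s by blast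
  then show False using uf_not_both[OF v B(1)] by simp
qed

lemma uf_sep: "is_ultrafilter U \<Longrightarrow> is_ultrafilter V \<Longrightarrow> U \<noteq> V \<Longrightarrow> \<exists>B. B \<in> U \<and> B \<notin> V"
  using uf_sub_eq by blast

lemma prime_pow_eq: "prime (q::nat) \<Longrightarrow> prime r \<Longrightarrow> q ^ k' = r ^ k \<Longrightarrow> k' \<ge> 1 \<Longrightarrow> q = r \<and> k' = k"
proof -
  assume q: "prime q" and r: "prime r" and e: "q ^ k' = r ^ k" and k': "k' \<ge> 1"
  have "q dvd q ^ k'" using k' by (simp add: dvd_power)
  then have "q dvd r ^ k" using e by simp
  then have "q dvd r" using prime_dvd_power[OF q] by blast
  then have qr: "q = r" using primes_dvd_imp_eq q r by blast
  have "1 < q" using q prime_gt_1_nat by blast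
  then show ?thesis using e qr power_inject_exp by blast
qed

lemma bar_uf: "p \<in> bar A \<Longrightarrow> is_ultrafilter p" by (simp add: bar_def)
lemma bar_in: "p \<in> bar A \<Longrightarrow> A \<in> p" by (simp add: bar_def)

lemma upow_mem: assumes "is_ultrafilter p" "A \<in> p" shows "(\<lambda>a. a ^ k) ` A \<in> upow p k"
proof -
  have "A \<subseteq> Npos" using uf_sub assms by blast
  then have "(\<lambda>a. a ^ k) ` A \<subseteq> Npos" by (auto simp: Npos_def)
  then show ?thesis using assms unfolding upow_def by blast
qed

lemma upow_inj:
  assumes p: "p \<in> bar Primes" and p': "p' \<in> bar Primes" and k: "k \<ge> 1" and k': "k' \<ge> 1"
    and e: "upow p k = upow p' k'"
  shows "p = p' \<and> k = k'"
proof -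
  have up: "is_ultrafilter p" "is_ultrafilter p'" using p p' bar_uf by blast+
  have "(\<lambda>a. a ^ k) ` Primes \<in> upow p' k'" using upow_mem[OF up(1) bar_in[OF p], of k] e by simp
  then obtain A' where A': "A' \<in> p'" "(\<lambda>a. a ^ k') ` A' \<subseteq> (\<lambda>a. a ^ k) ` Primes" unfolding upow_def by blast
  have "A' \<inter> Primes \<in> p'" using uf_inter[OF up(2) A'(1) bar_in[OF p']] .
  then obtain q where q: "q \<in> A'" "q \<in> Primes" using uf_nonempty[OF up(2)] by blast
  then obtain r where r: "r \<in> Primes" "q ^ k' = r ^ k" using A'(2) by blast
  have kk: "k = k'" using prime_pow_eq[of q r k' k] q r k' by (simp add: Primes_def)
  have "p = p'"
  proof (rule ccontr)
    assume "p \<noteq> p'"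
    then obtain B where B: "B \<in> p" "B \<notin> p'" using uf_sep up by blast
    have "(\<lambda>a. a ^ k) ` B \<in> upow p' k" using upow_mem[OF up(1) B(1), of k] e kk by simp
    then obtain A2 where A2: "A2 \<in> p'" "(\<lambda>a. a ^ k) ` A2 \<subseteq> (\<lambda>a. a ^ k) ` B" unfolding upow_def by blast
    have "Npos - B \<in> p'" using uf_compl[OF up(2) uf_sub[OF up(1) B(1)] B(2)] .
    then have "A2 \<inter> (Npos - B) \<in> p'" using uf_inter[OF up(2) A2(1)] by blast
    then obtain y where y: "y \<in> A2" "y \<notin> B" using uf_nonempty[OF up(2)] by blast
    then obtain b where b: "b \<in> B" "y ^ k = b ^ k" using A2(2) by blast
    have "y = b" using b(2) k by (simp add: power_eq_iff_eq_base)
    then show False using y b by blast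
  qed
  then show ?thesis using kk by simp
qed

definition Esep :: "nat set set \<Rightarrow> nat set set \<Rightarrow> nat set" where
  "Esep p q = (SOME B. B \<in> p \<and> B \<notin> q)"

lemma Esep: "is_ultrafilter p \<Longrightarrow> is_ultrafilter q \<Longrightarrow> p \<noteq> q \<Longrightarrow> Esep p q \<in> p \<and> Esep p q \<notin> q"
  unfolding Esep_def by (rule someI_ex) (rule uf_sep)

lemma valid_nth: assumes "valid_alpha al" "i < length al"
  shows "fst (al!i) \<in> bar Primes \<and> fst (snd (al!i)) \<ge> 1 \<and> snd (snd (al!i)) \<ge> 1"
proof -
  have m: "al ! i \<in> set al" using assms(2) by simp
  obtain p kk nn where e: "al ! i = (p, kk, nn)" by (cases "al ! i") auto
  have "\<forall>(p, k, n) \<in> set al. p \<in> bar Primes \<and> k \<ge> 1 \<and> n \<ge> 1" using assms(1) unfolding valid_alpha_def by blast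
  then have "p \<in> bar Primes \<and> kk \<ge> 1 \<and> nn \<ge> 1" using m e by fastforce
  then show ?thesis using e by simp
qed

lemma dir1:
  assumes x: "is_ultrafilter x" and v: "valid_alpha al" and sg: "sigma al = n" and F: "F_alpha al \<subseteq> x"
  shows "L n \<in> x"
proof -
  define m where "m = length al"
  define P where "P i = fst (al ! i)" for i
  define k where "k i = fst (snd (al ! i))" for i
  define c where "c i = snd (snd (al ! i))" for i
  have Pbar: "P i \<in> bar Primes" if "i < m" for i
    using valid_nth[OF v] that unfolding m_def P_def by blast
  have Puf: "is_ultrafilter (P i)" if "i < m" for i using Pbar[OF that] bar_uf by blast
  define Aset where "Aset p = Primes \<inter> (Npos \<inter> (\<Inter>j\<in>{j. j < m \<and> P j \<noteq> p}. Esep p (P j) \<inter> (Npos - Esep (P j) p)))" for p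
  define Aw where "Aw i = Aset (P i)" for i
  have Aw_in: "Aw i \<in> P i" if i: "i < m" for i
  proof -
    have "Npos \<inter> (\<Inter>j\<in>{j. j < m \<and> P j \<noteq> P i}. Esep (P i) (P j) \<inter> (Npos - Esep (P j) (P i))) \<in> P i"
    proof (rule uf_fin_inter[OF Puf[OF i]])
      show "finite {j. j < m \<and> P j \<noteq> P i}" by simp
      show "\<forall>j\<in>{j. j < m \<and> P j \<noteq> P i}. Esep (P i) (P j) \<inter> (Npos - Esep (P j) (P i)) \<in> P i"
      proof
        fix j assume j: "j \<in> {j. j < m \<and> P j \<noteq> P i}"
        have e1: "Esep (P i) (P j) \<in> P i" using Esep[OF Puf[OF i] Puf] j by auto
        have e2: "Esep (P j) (P i) \<in> P j" "Esep (P j) (P i) \<notin> P i" using Esep[OF Puf Puf[OF i]] j by auto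
        have "Npos - Esep (P j) (P i) \<in> P i" using uf_compl[OF Puf[OF i] uf_sub[OF Puf e2(1)] e2(2)] j by auto
        then show "Esep (P i) (P j) \<inter> (Npos - Esep (P j) (P i)) \<in> P i" using uf_inter[OF Puf[OF i] e1] by blast
      qed
    qed
    then show ?thesis unfolding Aw_def Aset_def using uf_inter[OF Puf[OF i] bar_in[OF Pbar[OF i]]] by blast
  qed
  have Aw_eq: "P i = P j \<Longrightarrow> Aw i = Aw j" for i j by (simp add: Aw_def)
  have Aw_P: "Aw i \<subseteq> Primes" for i unfolding Aw_def Aset_def by blast
  have Aw_disj: "Aw i \<inter> Aw j = {}" if "i < m" "j < m" "P i \<noteq> P j" for i j
    using that unfolding Aw_def Aset_def by blast
  define S where "S = {(\<Prod>i<length al. \<Prod>j<snd (snd (al ! i)). a i j ^ fst (snd (al ! i))) | a.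
               (\<forall>i<length al. \<forall>j<snd (snd (al ! i)). a i j \<in> Aw i) \<and>
               inj_on (\<lambda>(i, j). a i j) {(i, j). i < length al \<and> j < snd (snd (al ! i))}}"
  have "S \<in> F_alpha al"
    unfolding F_alpha_def S_def
  proof (rule CollectI, rule exI[of _ Aw], intro conjI allI impI)
    fix i assume "i < length al"
    then show "Aw i \<in> fst (al ! i)" "Aw i \<subseteq> Primes" using Aw_in Aw_P unfolding m_def P_def by auto
  next
    fix i j assume "i < length al" "j < length al" "fst (al ! i) = fst (al ! j)"
    then show "Aw i = Aw j" using Aw_eq unfolding P_def by blast
  next
    fix i j assume "i < length al" "j < length al" "fst (al ! i) \<noteq> fst (al ! j)"
    then show "Aw i \<inter> Aw j = {}" using Aw_disj unfolding P_def m_def by blast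
  qed simp
  then have Sx: "S \<in> x" using F by blast
  have "S \<subseteq> L n"
  proof
    fix y assume "y \<in> S"
    then obtain a where y: "y = (\<Prod>i<m. \<Prod>j<c i. a i j ^ k i)" and a: "\<forall>i<m. \<forall>j<c i. a i j \<in> Aw i"
      unfolding S_def m_def c_def k_def by blast
    have ap: "prime (a i j)" if "i < m" "j < c i" for i j 
    proof -
      have "a i j \<in> Aw i" using a that by blast
      then show ?thesis using Aw_P[of i] by (auto simp: Primes_def)
    qed
    have nz: "(\<Prod>j<c i. a i j ^ k i) \<noteq> 0" if "i < m" for i
      using ap[OF that] by (simp add: prime_gt_0_nat)
    have "Om y = (\<Sum>i<m. Om (\<Prod>j<c i. a i j ^ k i))" unfolding y using nz by (simp add: Om_prod)
    also have "\<dots> = (\<Sum>i<m. \<Sum>j<c i. Om (a i j ^ k i))"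
      by (rule sum.cong[OF refl], rule Om_prod) (use ap in \<open>auto simp: prime_gt_0_nat\<close>)
    also have "\<dots> = (\<Sum>i<m. \<Sum>j<c i. k i)"
      by (rule sum.cong[OF refl], rule sum.cong[OF refl]) (use ap Om_prime_power in auto)
    also have "\<dots> = n" using sg unfolding sigma_def m_def k_def c_def by (simp add: mult.commute)
    finally have "Om y = n" .
    moreover have "y \<noteq> 0" unfolding y using nz by simp
    ultimately show "y \<in> L n" by (simp add: L_char)
  qed
  then show ?thesis using uf_mono[OF x Sx _ L_Npos] by blast
qed

lemma prod_sorted: "finite X \<Longrightarrow> (\<Prod>l<card X. f (sorted_list_of_set X ! l)) = prod f X"
  using prod.reindex_bij_betw[OF bij_betw_nth[of "sorted_list_of_set X" "{..<card X}" X], of f]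
  by simp

lemma length_le_sum_list: "\<forall>y\<in>set xs. (1::nat) \<le> y \<Longrightarrow> length xs \<le> sum_list xs"
  by (induction xs) auto

definition ps :: "nat \<Rightarrow> nat list" where "ps a = sorted_list_of_set (prime_factors a)"
definition shape :: "nat \<Rightarrow> nat list" where "shape a = map (\<lambda>q. multiplicity q a) (ps a)"

lemma ps_facts: "distinct (ps a)" "length (ps a) = card (prime_factors a)" "set (ps a) = prime_factors a"
  by (simp_all add: ps_def)

lemma shape_facts:
  assumes "a \<in> L n"
  shows "a = (\<Prod>j<length (ps a). (ps a ! j) ^ (shape a ! j))"
    "sum_list (shape a) = n" "\<forall>y\<in>set (shape a). 1 \<le> y" "length (shape a) = length (ps a)"
    "\<forall>j<length (ps a). prime (ps a ! j)"
proof -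
  have a: "a \<noteq> 0" "Om a = n" using assms by (auto simp: L_char)
  have "(\<Prod>j<length (ps a). (ps a ! j) ^ (shape a ! j)) = (\<Prod>j<card (prime_factors a). (\<lambda>q. q ^ multiplicity q a) (sorted_list_of_set (prime_factors a) ! j))"
    by (simp add: shape_def ps_def)
  also have "\<dots> = (\<Prod>q\<in>prime_factors a. q ^ multiplicity q a)" by (rule prod_sorted) simp
  also have "\<dots> = a" using prod_prime_factors[OF a(1)] by simp
  finally show "a = (\<Prod>j<length (ps a). (ps a ! j) ^ (shape a ! j))" by simp
  have "sum_list (shape a) = (\<Sum>q\<in>prime_factors a. multiplicity q a)"
    unfolding shape_def using sum_list_distinct_conv_sum_set[OF ps_facts(1)] ps_facts(3) by metis
  also have "\<dots> = (\<Sum>q\<in>prime_factors a. Om (q ^ multiplicity q a))"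
    by (rule sum.cong[OF refl]) (simp add: Om_prime_power in_prime_factors_imp_prime)
  also have "\<dots> = Om (\<Prod>q\<in>prime_factors a. q ^ multiplicity q a)"
    by (rule Om_prod[symmetric]) (auto simp: prime_gt_0_nat dest: in_prime_factors_imp_prime)
  also have "\<dots> = n" using prod_prime_factors[OF a(1)] a(2) by simp
  finally show "sum_list (shape a) = n" .
  show "\<forall>y\<in>set (shape a). 1 \<le> y" unfolding shape_def using ps_facts(3)
    by (auto simp: prime_factors_multiplicity)
  show "length (shape a) = length (ps a)" by (simp add: shape_def)
  show "\<forall>j<length (ps a). prime (ps a ! j)" using ps_facts(3) nth_mem by fastforce
qed

lemma shape_nth: "j < length (ps a) \<Longrightarrow> shape a ! j = multiplicity (ps a ! j) a"
  by (simp add: shape_def)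

lemma shapes_finite: "finite (shape ` L n)"
proof (rule finite_subset)
  show "shape ` L n \<subseteq> {xs. set xs \<subseteq> {..n} \<and> length xs \<le> n}"
  proof (rule image_subsetI)
    fix a assume a: "a \<in> L n"
    note f = shape_facts[OF a]
    have "length (shape a) \<le> n" using length_le_sum_list[OF f(3)] f(2) by simp
    moreover have "set (shape a) \<subseteq> {..n}" using member_le_sum_list[of _ "shape a"] f(2) by auto
    ultimately show "shape a \<in> {xs. set xs \<subseteq> {..n} \<and> length xs \<le> n}" by simp
  qed
  show "finite {xs. set xs \<subseteq> {..n} \<and> length xs \<le> n}" by (rule finite_lists_length_le) simp
qed

lemma dir2:
  assumes x: "is_ultrafilter x" and Lx: "L n \<in> x"
  shows "\<exists>al. valid_alpha al \<and> sigma al = n \<and> F_alpha al \<subseteq> x"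
proof -
  have eq: "(\<Union>s\<in>shape ` L n. {a\<in>L n. shape a = s}) = L n" by blast
  have U: "(\<Union>s\<in>shape ` L n. {a\<in>L n. shape a = s}) \<in> x" unfolding eq by (rule Lx)
  obtain s where Tx0: "{a\<in>L n. shape a = s} \<in> x"
    using uf_fin_union[OF x shapes_finite[of n] U] by blast
  define T where "T = {a\<in>L n. shape a = s}"
  have Tx: "T \<in> x" using Tx0 T_def by simp
  define m where "m = length s"
  have T_len: "length (ps a) = m" if "a \<in> T" for a using shape_facts(4)[of a n] that T_def m_def by auto
  have T_prime: "prime (ps a ! j)" if "a \<in> T" "j < m" for a j using shape_facts(5)[of a n] T_len that T_def by auto
  have T_prod: "a = (\<Prod>j<m. (ps a ! j) ^ (s ! j))" if "a \<in> T" for a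
    using shape_facts(1)[of a n] T_len[OF that] that T_def by auto
  obtain a0 where a0: "a0 \<in> T" using uf_nonempty[OF x Tx] by blast
  have s_ge1: "s ! j \<ge> 1" if "j < m" for j
    using shape_facts(3)[of a0 n] a0 that T_def m_def nth_mem[of j s] by auto
  have "sum_list s = n" using shape_facts(2)[of a0 n] a0 T_def by auto
  then have s_sum: "(\<Sum>j<m. s ! j) = n" unfolding m_def by (simp add: sum_list_sum_nth atLeast0LessThan)
  define pp where "pp j = {B. B \<subseteq> Npos \<and> {a\<in>T. ps a ! j \<in> B} \<in> x}" for j
  have pp_bar: "pp j \<in> bar Primes" if "j < m" for j
  proof -
    have "\<forall>a\<in>T. ps a ! j \<in> Npos" using T_prime that by (auto simp: Npos_def Suc_le_eq prime_gt_0_nat)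
    then have u: "is_ultrafilter (pp j)" unfolding pp_def by (rule uf_push[OF x Tx])
    have "{a\<in>T. ps a ! j \<in> Primes} = T" using T_prime that by (auto simp: Primes_def)
    moreover have "Primes \<subseteq> Npos" by (auto simp: Primes_def Npos_def Suc_le_eq prime_gt_0_nat)
    ultimately have "Primes \<in> pp j" unfolding pp_def using Tx by auto
    then show ?thesis using u by (simp add: bar_def)
  qed
  define prs where "prs = map (\<lambda>j. (pp j, s ! j)) [0..<m]"
  define rp where "rp = remdups prs"
  define N where "N = length rp"
  define J where "J i = {j. j < m \<and> prs ! j = rp ! i}" for i
  define al where "al = map (\<lambda>r. (fst r, snd r, card {j. j < m \<and> prs ! j = r})) rp"
  have len_prs: "length prs = m" unfolding prs_def by simp
  have prs_nth: "prs ! j = (pp j, s ! j)" if "j < m" for j unfolding prs_def using that by simp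
  have rp_dist: "distinct rp" and set_rp: "set rp = set prs" unfolding rp_def by simp_all
  have len_al: "length al = N" unfolding al_def N_def by simp
  have al_nth: "al ! i = (fst (rp ! i), snd (rp ! i), card (J i))" if "i < N" for i
    unfolding al_def J_def using that N_def by simp
  have J_fin: "finite (J i)" for i unfolding J_def by simp
  have J_sub: "j \<in> J i \<Longrightarrow> j < m" for i j unfolding J_def by simp
  have J_ne: "\<exists>j. j \<in> J i" if "i < N" for i
  proof -
    have "rp ! i \<in> set prs" using that set_rp N_def nth_mem by metis
    then obtain j where "j < length prs" "prs ! j = rp ! i" by (auto simp: in_set_conv_nth)
    then show ?thesis unfolding J_def using len_prs by auto
  qed
  have J_cover: "\<exists>i<N. j \<in> J i" if "j < m" for j
  proof -
    have "prs ! j \<in> set rp" using that set_rp len_prs nth_mem by metis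
    then obtain i where "i < N" "rp ! i = prs ! j" by (auto simp: in_set_conv_nth N_def)
    then show ?thesis unfolding J_def using that by auto
  qed
  have J_disj: "J i \<inter> J i' = {}" if "i < N" "i' < N" "i \<noteq> i'" for i i'
  proof (rule ccontr)
    assume "J i \<inter> J i' \<noteq> {}"
    then obtain j where "j \<in> J i" "j \<in> J i'" by blast
    then have "rp ! i = rp ! i'" unfolding J_def by simp
    then show False using nth_eq_iff_index_eq[OF rp_dist] that N_def by metis
  qed
  have J_union: "{..<m} = (\<Union>i\<in>{..<N}. J i)" using J_cover J_sub by blast
  have J_rp: "rp ! i = (pp j, s ! j)" if "j \<in> J i" for i j
  proof -
    have "rp ! i = prs ! j" using that unfolding J_def by simp
    also have "\<dots> = (pp j, s ! j)" using prs_nth[OF J_sub[OF that]] .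
    finally show ?thesis .
  qed
  have J_snd: "snd (rp ! i) = s ! j" if "j \<in> J i" for i j using J_rp[OF that] by simp
  have J_fstp: "fst (rp ! i) = pp j" if "j \<in> J i" for i j using J_rp[OF that] by simp
  have J_card: "card (J i) \<ge> 1" if "i < N" for i
    using J_ne[OF that] J_fin[of i] by (metis One_nat_def Suc_leI card_gt_0_iff empty_iff)

  have valid: "valid_alpha al"
    unfolding valid_alpha_def
  proof
    have "\<forall>t\<in>set al. fst t \<in> bar Primes \<and> fst (snd t) \<ge> 1 \<and> snd (snd t) \<ge> 1"
    proof
      fix t assume "t \<in> set al"
      then obtain i where i: "i < N" "t = al ! i" using len_al by (auto simp: in_set_conv_nth)
      obtain j where j: "j \<in> J i" using J_ne[OF i(1)] by blast
      show "fst t \<in> bar Primes \<and> fst (snd t) \<ge> 1 \<and> snd (snd t) \<ge> 1"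
        using i al_nth J_fstp[OF j] J_snd[OF j] pp_bar[OF J_sub[OF j]] s_ge1[OF J_sub[OF j]] J_card[OF i(1)]
        by simp
    qed
    then show "\<forall>(p, k, n)\<in>set al. p \<in> bar Primes \<and> 1 \<le> k \<and> 1 \<le> n" by fastforce
    have "map (\<lambda>(p, k, n). upow p k) al = map (\<lambda>r. upow (fst r) (snd r)) rp"
      unfolding al_def by simp
    moreover have "distinct (map (\<lambda>r. upow (fst r) (snd r)) rp)"
    proof (rule distinct_map[THEN iffD2], intro conjI rp_dist inj_onI)
      fix r r' assume r: "r \<in> set rp" "r' \<in> set rp" and e: "upow (fst r) (snd r) = upow (fst r') (snd r')"
      obtain j where j: "j < m" "r = prs ! j" using r(1) set_rp len_prs by (auto simp: in_set_conv_nth)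
      obtain j' where j': "j' < m" "r' = prs ! j'" using r(2) set_rp len_prs by (auto simp: in_set_conv_nth)
      have "fst r = fst r' \<and> snd r = snd r'"
        using upow_inj[OF _ _ _ _ e] j j' prs_nth pp_bar s_ge1 by simp
      then show "r = r'" by (simp add: prod_eq_iff)
    qed
    ultimately show "distinct (map (\<lambda>(p, k, n). upow p k) al)" by simp
  qed

  have "sigma al = (\<Sum>i<N. snd (rp ! i) * card (J i))"
    unfolding sigma_def len_al by (rule sum.cong[OF refl]) (simp add: al_nth)
  also have "\<dots> = (\<Sum>i<N. \<Sum>j\<in>J i. s ! j)"
  proof (rule sum.cong[OF refl])
    fix i
    have "(\<Sum>j\<in>J i. s ! j) = (\<Sum>j\<in>J i. snd (rp ! i))" by (rule sum.cong[OF refl]) (simp add: J_snd)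
    then show "snd (rp ! i) * card (J i) = (\<Sum>j\<in>J i. s ! j)" by simp
  qed
  also have "\<dots> = (\<Sum>j\<in>(\<Union>i\<in>{..<N}. J i). s ! j)"
    by (rule sum.UNION_disjoint[symmetric]) (use J_fin J_disj in auto)
  also have "\<dots> = n" using J_union s_sum by simp
  finally have sig: "sigma al = n" .

  have Fx: "F_alpha al \<subseteq> x"
  proof
    fix S assume "S \<in> F_alpha al"
    then obtain A where A1: "\<forall>i<length al. A i \<in> fst (al ! i) \<and> A i \<subseteq> Primes"
      and S: "S = {(\<Prod>i<length al. \<Prod>j<snd (snd (al ! i)). a i j ^ fst (snd (al ! i))) | a.
               (\<forall>i<length al. \<forall>j<snd (snd (al ! i)). a i j \<in> A i) \<and>
               inj_on (\<lambda>(i, j). a i j) {(i, j). i < length al \<and> j < snd (snd (al ! i))}}"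
      unfolding F_alpha_def by blast
    define C where "C = {(i, j). i < N \<and> j \<in> J i}"
    define T' where "T' = T \<inter> (Npos \<inter> (\<Inter>(i, j)\<in>C. {a\<in>T. ps a ! j \<in> A i}))"
    have "Npos \<inter> (\<Inter>(i, j)\<in>C. {a\<in>T. ps a ! j \<in> A i}) \<in> x"
    proof (rule uf_fin_inter[OF x])
      show "finite C" by (rule finite_subset[of _ "{..<N} \<times> {..<m}"]) (use J_sub in \<open>auto simp: C_def\<close>)
      show "\<forall>ij\<in>C. (case ij of (i, j) \<Rightarrow> {a \<in> T. ps a ! j \<in> A i}) \<in> x"
      proof
        fix ij assume "ij \<in> C"
        then obtain i j where ij: "ij = (i, j)" "i < N" "j \<in> J i" unfolding C_def by blast
        have "A i \<in> pp j" using A1 ij len_al al_nth J_fstp by fastforce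
        then show "(case ij of (i, j) \<Rightarrow> {a \<in> T. ps a ! j \<in> A i}) \<in> x" using ij unfolding pp_def by simp
      qed
    qed
    then have T'x: "T' \<in> x" unfolding T'_def using uf_inter[OF x Tx] by blast
    have "T' \<subseteq> S"
    proof
      fix a assume aT': "a \<in> T'"
      then have aT: "a \<in> T" unfolding T'_def by blast
      have aA: "ps a ! j \<in> A i" if "i < N" "j \<in> J i" for i j
        using aT' that unfolding T'_def C_def by blast
      define b where "b i l = ps a ! (sorted_list_of_set (J i) ! l)" for i l
      have slJ: "sorted_list_of_set (J i) ! l \<in> J i" if "l < card (J i)" for i l
        using nth_mem[of l "sorted_list_of_set (J i)"] that J_fin by simp
      have P1: "\<forall>i<length al. \<forall>l<snd (snd (al ! i)). b i l \<in> A i"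
        using al_nth len_al aA slJ unfolding b_def by simp
      have P2: "inj_on (\<lambda>(i, l). b i l) {(i, l). i < length al \<and> l < snd (snd (al ! i))}"
      proof (rule inj_onI, clarify)
        fix i1 l1 i2 l2
        assume h: "i1 < length al" "l1 < snd (snd (al ! i1))" "i2 < length al" "l2 < snd (snd (al ! i2))"
          "b i1 l1 = b i2 l2"
        have h1: "i1 < N" "l1 < card (J i1)" "i2 < N" "l2 < card (J i2)" using h len_al al_nth by auto
        define j1 where "j1 = sorted_list_of_set (J i1) ! l1"
        define j2 where "j2 = sorted_list_of_set (J i2) ! l2"
        have j: "j1 \<in> J i1" "j2 \<in> J i2" using slJ h1 j1_def j2_def by auto
        have "ps a ! j1 = ps a ! j2" using h(5) unfolding b_def j1_def j2_def .
        then have "j1 = j2" using nth_eq_iff_index_eq[OF ps_facts(1)] T_len[OF aT] J_sub j by metis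
        then have ii: "i1 = i2" using J_disj h1 j by blast
        then have "sorted_list_of_set (J i1) ! l1 = sorted_list_of_set (J i1) ! l2" using \<open>j1 = j2\<close> j1_def j2_def by simp
        moreover have "l1 < length (sorted_list_of_set (J i1))" "l2 < length (sorted_list_of_set (J i1))"
          using h1 ii by simp_all
        moreover have "inj_on ((!) (sorted_list_of_set (J i1))) {..<length (sorted_list_of_set (J i1))}"
          by (rule inj_on_nth) auto
        ultimately have "l1 = l2" by (auto dest: inj_onD)
        then show "i1 = i2 \<and> l1 = l2" using ii by simp
      qed
      have "(\<Prod>i<length al. \<Prod>l<snd (snd (al ! i)). b i l ^ fst (snd (al ! i)))
          = (\<Prod>i<N. \<Prod>l<card (J i). (\<lambda>j. (ps a ! j) ^ snd (rp ! i)) (sorted_list_of_set (J i) ! l))"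
        unfolding len_al b_def by (rule prod.cong[OF refl]) (simp add: al_nth)
      also have "\<dots> = (\<Prod>i<N. \<Prod>j\<in>J i. (ps a ! j) ^ snd (rp ! i))"
        by (rule prod.cong[OF refl], rule prod_sorted[OF J_fin])
      also have "\<dots> = (\<Prod>i<N. \<Prod>j\<in>J i. (ps a ! j) ^ (s ! j))"
        by (rule prod.cong[OF refl], rule prod.cong[OF refl]) (simp add: J_snd)
      also have "\<dots> = (\<Prod>j\<in>(\<Union>i\<in>{..<N}. J i). (ps a ! j) ^ (s ! j))"
        by (rule prod.UNION_disjoint[symmetric]) (use J_fin J_disj in auto)
      also have "\<dots> = a" using J_union T_prod[OF aT] by simp
      finally have P3: "a = (\<Prod>i<length al. \<Prod>l<snd (snd (al ! i)). b i l ^ fst (snd (al ! i)))" by simp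
      show "a \<in> S" unfolding S mem_Collect_eq by (intro exI[of _ b] conjI P1 P2 P3)
    qed
    moreover have "S \<subseteq> Npos"
    proof
      fix y assume "y \<in> S"
      then have "\<exists>a. y = (\<Prod>i<length al. \<Prod>j<snd (snd (al ! i)). a i j ^ fst (snd (al ! i))) \<and>
               ((\<forall>i<length al. \<forall>j<snd (snd (al ! i)). a i j \<in> A i) \<and>
               inj_on (\<lambda>(i, j). a i j) {(i, j). i < length al \<and> j < snd (snd (al ! i))})"
        unfolding S mem_Collect_eq .
      then obtain a where y: "y = (\<Prod>i<length al. \<Prod>j<snd (snd (al ! i)). a i j ^ fst (snd (al ! i)))"
        and a: "\<forall>i<length al. \<forall>j<snd (snd (al ! i)). a i j \<in> A i" by blast
      have "a i j \<noteq> 0" if "i < length al" "j < snd (snd (al ! i))" for i j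
      proof -
        have "a i j \<in> A i" "A i \<subseteq> Primes" using a A1 that by auto
        then have "prime (a i j)" by (auto simp: Primes_def)
        then show ?thesis by auto
      qed
      then have "y \<noteq> 0" unfolding y by simp
      then show "y \<in> Npos" by (simp add: Npos_def)
    qed
    ultimately show "S \<in> x" using uf_mono[OF x T'x] by blast
  qed
  show ?thesis using valid sig Fx by blast
qed

theorem theorem2p7:
  fixes x :: "nat set set" and n :: nat
  assumes "is_ultrafilter x" and "n \<ge> 1"
  shows "(\<exists>al. valid_alpha al \<and> sigma al = n \<and> F_alpha al \<subseteq> x) \<longleftrightarrow> x \<in> bar (L n)"
  using dir1[OF assms(1)] dir2[OF assms(1)] assms(1) unfolding bar_def by blast

end
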